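(* Let $E,F$ be PVMs on a finite-dimensional Hilbert space with $E\le F$, and let $\rho$ be a density operator commuting with $E$. Then $$D(\rho\|\mathcal E_F(\rho))\le\log w(E).$$
   Context: $D(\rho\|\sigma)=\mathrm{Tr}\rho(\log\rho-\log\sigma)$. For PVMs $E=\{E_i\}$, $F=\{F_j\}$, $E\le F$ means each $E_i$ is a sum of some $F_j$; $\rho$ commutes with $E$ if $\rho E_i=E_i\rho$ for all $i$; $w(E)=\sup_i\dim(\mathrm{range}\,E_i)$; $\mathcal E_F(\rho)=\sum_jF_j\rho F_j$. *)

theory Defs
  imports "HOL-Analysis.Analysis"
begin

definition adj :: "complex^'n^'m \<Rightarrow> complex^'m^'n" where
  "adj A = (\<chi> i j. cnj (A $ j $ i))"

definition unitary_mat :: "complex^'n^'n \<Rightarrow> bool" where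
  "unitary_mat U \<longleftrightarrow> adj U ** U = mat 1 \<and> U ** adj U = mat 1"

definition diag_mat :: "('n::finite \<Rightarrow> complex) \<Rightarrow> complex^'n^'n" where
  "diag_mat d = (\<chi> i j. if i = j then d i else 0)"

definition hermitian :: "complex^'n^'n \<Rightarrow> bool" where
  "hermitian A \<longleftrightarrow> adj A = A"

definition psd :: "complex^'n^'n \<Rightarrow> bool" where
  "psd A \<longleftrightarrow> hermitian A \<and> (\<forall>x. Re (\<Sum>i\<in>UNIV. cnj (x $ i) * (A *v x) $ i) \<ge> 0)"

definition density_op :: "complex^'n^'n \<Rightarrow> bool" where
  "density_op \<rho> \<longleftrightarrow> psd \<rho> \<and> trace \<rho> = 1"

definition projection :: "complex^'n^'n \<Rightarrow> bool" where
  "projection P \<longleftrightarrow> P ** P = P \<and> adj P = P"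

definition PVM :: "'i set \<Rightarrow> ('i \<Rightarrow> complex^'n^'n) \<Rightarrow> bool" where
  "PVM I E \<longleftrightarrow> finite I \<and> I \<noteq> {} \<and> (\<forall>i\<in>I. projection (E i)) \<and> (\<Sum>i\<in>I. E i) = mat 1"

definition pvm_le :: "'i set \<Rightarrow> ('i \<Rightarrow> complex^'n^'n) \<Rightarrow> 'j set \<Rightarrow> ('j \<Rightarrow> complex^'n^'n) \<Rightarrow> bool" where
  "pvm_le I E J F \<longleftrightarrow> (\<forall>i\<in>I. \<exists>S\<subseteq>J. E i = (\<Sum>j\<in>S. F j))"

definition commutes_with :: "complex^'n^'n \<Rightarrow> 'i set \<Rightarrow> ('i \<Rightarrow> complex^'n^'n) \<Rightarrow> bool" where
  "commutes_with \<rho> I E \<longleftrightarrow> (\<forall>i\<in>I. \<rho> ** E i = E i ** \<rho>)"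

definition range_dim :: "complex^'n^'n \<Rightarrow> nat" where
  "range_dim A = vec.dim (range (\<lambda>x. A *v x))"

definition width :: "'i set \<Rightarrow> ('i \<Rightarrow> complex^'n^'n) \<Rightarrow> nat" where
  "width I E = Sup (range_dim ` E ` I)"

definition pinch :: "'j set \<Rightarrow> ('j \<Rightarrow> complex^'n^'n) \<Rightarrow> complex^'n^'n \<Rightarrow> complex^'n^'n" where
  "pinch J F \<rho> = (\<Sum>j\<in>J. F j ** \<rho> ** F j)"

definition mat_fun :: "(real \<Rightarrow> real) \<Rightarrow> complex^'n^'n \<Rightarrow> complex^'n^'n" where
  "mat_fun f A = (SOME B. \<exists>U (ev::'n \<Rightarrow> real). unitary_mat U \<and>
       A = U ** diag_mat (\<lambda>i. complex_of_real (ev i)) ** adj U \<and>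
       B = U ** diag_mat (\<lambda>i. complex_of_real (f (ev i))) ** adj U)"

text \<open>Matrix logarithm on the support (log taken as 0 on the kernel, i.e. 0 log 0 = 0).\<close>
definition mat_log :: "complex^'n^'n \<Rightarrow> complex^'n^'n" where
  "mat_log A = mat_fun (\<lambda>x. if x > 0 then ln x else 0) A"

definition rel_entropy :: "complex^'n^'n \<Rightarrow> complex^'n^'n \<Rightarrow> ereal" where
  "rel_entropy \<rho> \<sigma> =
    (if range (\<lambda>x. \<rho> *v x) \<subseteq> range (\<lambda>x. \<sigma> *v x)
     then ereal (Re (trace (\<rho> ** (mat_log \<rho> - mat_log \<sigma>))))
     else \<infinity>)"

end

theory Submission
  imports Defs
begin


definition cinner :: "complex^'n \<Rightarrow> complex^'n \<Rightarrow> complex" where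
  "cinner x y = (\<Sum>i\<in>UNIV. cnj (x$i) * y$i)"

lemma cinner_add_right: "cinner x (y + z) = cinner x y + cinner x z"
  by (simp add: cinner_def distrib_left sum.distrib)
lemma cinner_add_left: "cinner (x + y) z = cinner x z + cinner y z"
  by (simp add: cinner_def distrib_right sum.distrib)
lemma cinner_diff_right: "cinner x (y - z) = cinner x y - cinner x z"
  by (simp add: cinner_def right_diff_distrib sum_subtractf)
lemma cinner_diff_left: "cinner (x - y) z = cinner x z - cinner y z"
  by (simp add: cinner_def left_diff_distrib sum_subtractf)
lemma cinner_scale_right: "cinner x (c *s y) = c * cinner x y"
  by (simp add: cinner_def sum_distrib_left algebra_simps)
lemma cinner_scale_left: "cinner (c *s x) y = cnj c * cinner x y"
  by (simp add: cinner_def sum_distrib_left algebra_simps)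
lemma cinner_zero_right[simp]: "cinner x 0 = 0" by (simp add: cinner_def)
lemma cinner_zero_left[simp]: "cinner 0 x = 0" by (simp add: cinner_def)
lemma cinner_sum_right: "cinner x (\<Sum>k\<in>S. f k) = (\<Sum>k\<in>S. cinner x (f k))"
  by (induction S rule: infinite_finite_induct) (simp_all add: cinner_add_right)
lemma cinner_sum_left: "cinner (\<Sum>k\<in>S. f k) y = (\<Sum>k\<in>S. cinner (f k) y)"
  by (induction S rule: infinite_finite_induct) (simp_all add: cinner_add_left)
lemma cinner_commute: "cinner y x = cnj (cinner x y)"
  by (simp add: cinner_def mult.commute)

lemma cinner_adj: "cinner x (A *v y) = cinner (adj A *v x) y"
proof -
  have "cinner x (A *v y) = (\<Sum>i\<in>UNIV. \<Sum>j\<in>UNIV. cnj (x$i) * (A$i$j * y$j))"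
    by (simp add: cinner_def matrix_vector_mult_def sum_distrib_left)
  also have "\<dots> = (\<Sum>j\<in>UNIV. \<Sum>i\<in>UNIV. cnj (x$i) * (A$i$j * y$j))"
    by (rule sum.swap)
  also have "\<dots> = cinner (adj A *v x) y"
    by (simp add: cinner_def matrix_vector_mult_def adj_def sum_distrib_right sum_distrib_left mult_ac)
  finally show ?thesis .
qed

lemma cinner_herm: "hermitian A \<Longrightarrow> cinner x (A *v y) = cinner (A *v x) y"
  by (simp add: cinner_adj hermitian_def)

lemma cinner_self: "cinner x x = complex_of_real ((norm x)^2)"
proof -
  have "(norm x)^2 = (\<Sum>i\<in>UNIV. (cmod (x$i))^2)"
    by (simp add: norm_vec_def L2_set_def sum_nonneg)
  have "\<And>i. cnj (x$i) * x$i = complex_of_real ((cmod (x$i))^2)"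
    by (metis complex_norm_square mult.commute)
  then have "cinner x x = (\<Sum>i\<in>UNIV. complex_of_real ((cmod (x$i))^2))"
    unfolding cinner_def by presburger
  also have "\<dots> = complex_of_real (\<Sum>i\<in>UNIV. (cmod (x$i))^2)"
    by (rule of_real_sum[symmetric])
  finally show ?thesis using \<open>(norm x)^2 = _\<close> by simp
qed

lemma cinner_self_Re: "Re (cinner x x) = (norm x)^2"
  by (simp add: cinner_self)

lemma cinner_self_eq0: "cinner x x = 0 \<longleftrightarrow> x = 0"
  by (simp add: cinner_self)

lemma adj_adj[simp]: "adj (adj A) = A"
  by (simp add: adj_def vec_eq_iff)

lemma adj_mult: "adj (A ** B) = adj B ** adj A"
  by (simp add: adj_def matrix_matrix_mult_def vec_eq_iff mult.commute)

lemma adj_add: "adj (A + B) = adj A + adj B"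
  by (simp add: adj_def vec_eq_iff)

lemma adj_zero[simp]: "adj 0 = 0"
  by (simp add: adj_def vec_eq_iff)

lemma adj_sum: "adj (\<Sum>k\<in>S. f k) = (\<Sum>k\<in>S. adj (f k))"
  by (induction S rule: infinite_finite_induct) (simp_all add: adj_add)

lemma vec_dim_UNIV: "vec.dim (UNIV :: (complex^'n) set) = CARD('n)"
  by (rule vec_dim_card)



lemma quad0: fixes a c :: real assumes "\<And>t. a*t + c*t^2 \<le> 0" shows "a = 0"
proof (rule ccontr)
  assume a: "a \<noteq> 0"
  define r where "r = 1/(abs c+1)"
  have r: "r > 0" unfolding r_def by simp
  have "1 + c*r = (abs c+1+c)/(abs c+1)" unfolding r_def by (simp add: field_simps)
  also have "\<dots> > 0" by (intro divide_pos_pos) linarith+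
  finally have cs: "1 + c*r > 0" .
  have "a*(a*r) + c*(a*r)^2 = a^2 * r * (1 + c*r)" by (simp add: algebra_simps power2_eq_square)
  also have "\<dots> > 0" using a r cs by simp
  finally show False using assms[of "a*r"] by simp
qed

definition csub :: "(complex^'n) set \<Rightarrow> bool" where
  "csub W \<longleftrightarrow> 0 \<in> W \<and> (\<forall>x\<in>W. \<forall>y\<in>W. x + y \<in> W) \<and> (\<forall>c. \<forall>x\<in>W. c *s x \<in> W)"

lemma csub_diff: "csub W \<Longrightarrow> x \<in> W \<Longrightarrow> y \<in> W \<Longrightarrow> x - y \<in> W"
proof -
  assume W: "csub W" "x \<in> W" "y \<in> W"
  have "x - y = x + (-1) *s y" by (simp add: vec_eq_iff)
  then show ?thesis using W unfolding csub_def by metis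
qed

lemma scaleR_as_s: "(r::real) *\<^sub>R (x::complex^'n) = complex_of_real r *s x"
  unfolding vec_eq_iff vector_scaleR_component vector_smult_component by (simp add: scaleR_conv_of_real)

lemma csub_subspace: "csub W \<Longrightarrow> subspace W"
  unfolding subspace_def csub_def by (simp add: scaleR_as_s)

lemma cont_q: "continuous_on S (\<lambda>x. Re (cinner x (A *v x)))"
  unfolding cinner_def matrix_vector_mult_def
  by (intro continuous_intros continuous_on_component continuous_on_id)

lemma q_scale: "Re (cinner (complex_of_real c *s x) (A *v (complex_of_real c *s x))) = c^2 * Re (cinner x (A *v x))"
  by (simp add: cinner_scale_left cinner_scale_right vec.scale power2_eq_square)

lemma herm_eigvec:
  assumes A: "hermitian A" and W: "csub W" and inv: "\<And>x. x \<in> W \<Longrightarrow> A *v x \<in> W"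
    and x0: "x0 \<in> W" "x0 \<noteq> 0"
  shows "\<exists>u\<in>W. norm u = 1 \<and> (\<exists>l::real. A *v u = complex_of_real l *s u)"
proof -
  define q where "q x = Re (cinner x (A *v x))" for x
  define K where "K = W \<inter> sphere 0 1"
  have "compact K" unfolding K_def
    by (intro closed_Int_compact closed_subspace csub_subspace W compact_sphere)
  moreover have "K \<noteq> {}"
  proof -
    have "complex_of_real (1 / norm x0) *s x0 \<in> W" using W x0 unfolding csub_def by blast
    moreover have "norm (complex_of_real (1 / norm x0) *s x0) = 1"
      using x0 unfolding scaleR_as_s[symmetric] by simp
    ultimately show ?thesis unfolding K_def by auto
  qed
  moreover have "continuous_on K q" unfolding q_def by (rule cont_q)
  ultimately obtain u where uK: "u \<in> K" and umax: "\<And>y. y \<in> K \<Longrightarrow> q y \<le> q u"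
    using continuous_attains_sup by metis
  have uW: "u \<in> W" and un: "norm u = 1" using uK unfolding K_def by auto
  define l where "l = q u"
  have bound: "q z \<le> l * (norm z)^2" if z: "z \<in> W" for z
  proof (cases "z = 0")
    case True then show ?thesis by (simp add: q_def)
  next
    case False
    define z' where "z' = complex_of_real (1 / norm z) *s z"
    have "z' \<in> W" unfolding z'_def using W z unfolding csub_def by blast
    moreover have "norm z' = 1" unfolding z'_def using False unfolding scaleR_as_s[symmetric] by simp
    ultimately have "z' \<in> K" unfolding K_def by simp
    then have "q z' \<le> l" using umax l_def by blast
    moreover have "z = complex_of_real (norm z) *s z'" unfolding z'_def using False
      by (simp add: vec_eq_iff)
    then have "q z = (norm z)^2 * q z'" unfolding q_def by (metis q_scale)
    ultimately show ?thesis by (metis mult.commute mult_right_mono zero_le_power2)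
  qed
  define v where "v = A *v u - complex_of_real l *s u"
  have vW: "v \<in> W" unfolding v_def using W uW inv by (intro csub_diff) (auto simp: csub_def)
  have "Re (cinner v (A *v u)) - l * Re (cinner v u) = 0"
  proof (rule quad0)
    fix t :: real
    let ?z = "u + complex_of_real t *s v"
    have zW: "?z \<in> W" using W uW vW unfolding csub_def by blast
    have h1: "Re (cinner u (A *v v)) = Re (cinner v (A *v u))"
      using cinner_herm[OF A, of u v] cinner_commute[of "A *v u" v] by simp
    have "q ?z = q u + 2 * t * Re (cinner v (A *v u)) + t^2 * q v"
      unfolding q_def using h1
      by (simp add: vec.add vec.scale cinner_add_left cinner_add_right cinner_scale_left cinner_scale_right
          power2_eq_square algebra_simps)
    moreover have "(norm ?z)^2 = 1 + 2 * t * Re (cinner v u) + t^2 * (norm v)^2"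
      unfolding cinner_self_Re[symmetric] using un cinner_commute[of u v]
      by (simp add: cinner_add_left cinner_add_right cinner_scale_left cinner_scale_right
          cinner_self_Re power2_eq_square algebra_simps)
    moreover have "q ?z \<le> l * (norm ?z)^2" using bound zW by blast
    ultimately have "2 * t * Re (cinner v (A *v u)) + t^2 * q v \<le> l * (2 * t * Re (cinner v u) + t^2 * (norm v)^2)"
      unfolding l_def by (simp add: algebra_simps)
    then show "(Re (cinner v (A *v u)) - l * Re (cinner v u)) * t + ((q v - l * (norm v)^2)/2) * t^2 \<le> 0"
      by (simp add: field_simps)
  qed
  then have "Re (cinner v v) = 0"
    unfolding v_def by (simp add: cinner_diff_right cinner_scale_right)
  then have "v = 0" by (simp add: cinner_self_Re)
  then have "A *v u = complex_of_real l *s u" unfolding v_def by simp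
  then show ?thesis using uW un by blast
qed



lemma matsum_mv: "(\<Sum>k\<in>K. P k) *v x = (\<Sum>k\<in>K. P k *v x)"
  by (induction K rule: infinite_finite_induct) (simp_all add: matrix_vector_mult_add_rdistrib)

lemma proj_idem_v: "projection P \<Longrightarrow> P *v (P *v x) = P *v x"
  by (simp add: projection_def matrix_vector_mul_assoc)

lemma proj_cinner: "projection P \<Longrightarrow> cinner x (P *v x) = cinner (P *v x) (P *v x)"
  by (metis cinner_adj proj_idem_v projection_def)

lemma proj_cinner2: "projection P \<Longrightarrow> cinner x (P *v y) = cinner (P *v x) y"
  by (metis cinner_adj projection_def)

lemma pvm_sum_v: "PVM K P \<Longrightarrow> (\<Sum>k\<in>K. P k *v x) = x"
  unfolding PVM_def by (metis matsum_mv matrix_vector_mul_lid)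

lemma pvm_orth_v:
  assumes PV: "PVM K P" and k: "k \<in> K" and l: "l \<in> K" and kl: "k \<noteq> l"
  shows "P k *v (P l *v y) = 0"
proof -
  define x where "x = P l *v y"
  have fin: "finite K" and pr: "\<And>k. k \<in> K \<Longrightarrow> projection (P k)" using PV unfolding PVM_def by auto
  have xl: "P l *v x = x" unfolding x_def using pr[OF l] by (simp add: proj_idem_v)
  have "cinner x x = cinner x (\<Sum>k\<in>K. P k *v x)" using pvm_sum_v[OF PV] by simp
  also have "\<dots> = (\<Sum>k\<in>K. cinner (P k *v x) (P k *v x))"
    by (simp add: cinner_sum_right proj_cinner pr)
  finally have "(norm x)^2 = (\<Sum>k\<in>K. (norm (P k *v x))^2)"
    by (metis (no_types, lifting) Re_sum cinner_self_Re sum.cong)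
  also have "\<dots> = (norm (P l *v x))^2 + (\<Sum>k\<in>K-{l}. (norm (P k *v x))^2)"
    using fin l by (simp add: sum.remove)
  finally have "(\<Sum>k\<in>K-{l}. (norm (P k *v x))^2) = 0" using xl by simp
  then have "(norm (P k *v x))^2 = 0"
    using fin k kl by (subst (asm) sum_nonneg_eq_0_iff) auto
  then show ?thesis unfolding x_def by simp
qed

lemma pvm_proj: "PVM K P \<Longrightarrow> k \<in> K \<Longrightarrow> projection (P k)"
  unfolding PVM_def by auto



definition orthonormal :: "(complex^'n) set \<Rightarrow> bool" where
  "orthonormal S \<longleftrightarrow> (\<forall>u\<in>S. \<forall>v\<in>S. cinner u v = (if u = v then 1 else 0))"

lemma orthonormal_indep: assumes o: "orthonormal S" shows "vec.independent S"
proof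
  assume "vec.dependent S"
  then obtain t u v where t: "finite t" "t \<subseteq> S" "(\<Sum>v\<in>t. u v *s v) = 0" and v: "v \<in> t" "u v \<noteq> 0"
    unfolding vec.dependent_explicit by blast
  have "0 = cinner v (\<Sum>w\<in>t. u w *s w)" using t by simp
  also have "\<dots> = (\<Sum>w\<in>t. u w * (if v = w then 1 else 0))"
  proof -
    have "\<forall>w\<in>t. cinner v w = (if v = w then 1 else 0)"
      using o t(2) v(1) unfolding orthonormal_def by blast
    then show ?thesis unfolding cinner_sum_right cinner_scale_right by simp
  qed
  also have "\<dots> = u v" using t v by (subst sum.remove[of t v]) (auto intro!: sum.neutral split: if_splits)
  finally show False using v by simp
qed

lemma orthonormal_finite: "orthonormal S \<Longrightarrow> finite S"
  using orthonormal_indep vec.finiteI_independent by blast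

lemma orthonormal_card: "orthonormal (S::(complex^'n) set) \<Longrightarrow> card S \<le> CARD('n)"
proof -
  assume "orthonormal S"
  then have "card S \<le> vec.dim (UNIV::(complex^'n) set)"
    using orthonormal_indep vec.independent_card_le_dim[of S UNIV] by blast
  then show ?thesis using vec_dim_UNIV by metis
qed


definition goodset where
  "goodset A K P S \<longleftrightarrow> orthonormal S \<and> (\<forall>u\<in>S. \<exists>l::real. A *v u = complex_of_real l *s u)
     \<and> (\<forall>u\<in>S. \<exists>k\<in>K. P k *v u = u)"

lemma goodset_extend:
  assumes A: "hermitian A" and PV: "PVM K P" and comm: "\<And>k. k \<in> K \<Longrightarrow> A ** P k = P k ** A"
    and G: "goodset A K P S" and x: "x \<notin> vec.span S"
  shows "\<exists>u. u \<notin> S \<and> goodset A K P (insert u S)"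
proof -
  have o: "orthonormal S" and ev: "\<And>u. u \<in> S \<Longrightarrow> \<exists>l::real. A *v u = complex_of_real l *s u"
    and cp: "\<And>u. u \<in> S \<Longrightarrow> \<exists>k\<in>K. P k *v u = u" using G unfolding goodset_def by auto
  have fin: "finite S" using o by (rule orthonormal_finite)
  define x' where "x' = x - (\<Sum>s\<in>S. cinner s x *s s)"
  have "(\<Sum>s\<in>S. cinner s x *s s) \<in> vec.span S"
    by (intro vec.span_sum vec.span_scale vec.span_base)
  then have x'0: "x' \<noteq> 0" unfolding x'_def using x by auto
  have x'o: "cinner s x' = 0" if s: "s \<in> S" for s
  proof -
    have "cinner s (\<Sum>s'\<in>S. cinner s' x *s s') = (\<Sum>s'\<in>S. cinner s' x * (if s = s' then 1 else 0))"
      unfolding cinner_sum_right cinner_scale_right using o s unfolding orthonormal_def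
      by (intro sum.cong) auto
    also have "\<dots> = cinner s x" using fin s
      by (subst sum.remove[of S s]) (auto intro!: sum.neutral split: if_splits)
    finally show ?thesis unfolding x'_def cinner_diff_right by simp
  qed
  have "(\<Sum>k\<in>K. P k *v x') = x'" by (rule pvm_sum_v[OF PV])
  then obtain k where k: "k \<in> K" "P k *v x' \<noteq> 0" using x'0
    by (metis (mono_tags, lifting) sum.neutral)
  have prk: "projection (P k)" using pvm_proj[OF PV k(1)] .
  define W where "W = {y. P k *v y = y \<and> (\<forall>s\<in>S. cinner s y = 0)}"
  have csW: "csub W" unfolding csub_def W_def
    by (auto simp: vec.add vec.scale cinner_add_right cinner_scale_right)
  have invW: "A *v y \<in> W" if y: "y \<in> W" for y
  proof -
    have "P k *v (A *v y) = A *v y"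
      using y comm[OF k(1)] unfolding W_def by (metis (mono_tags, lifting) matrix_vector_mul_assoc mem_Collect_eq)
    moreover have "cinner s (A *v y) = 0" if s: "s \<in> S" for s
    proof -
      obtain l where l: "A *v s = complex_of_real l *s s" using ev[OF s] by blast
      have "cinner s (A *v y) = cinner (A *v s) y" by (rule cinner_herm[OF A])
      also have "\<dots> = 0" using l y s unfolding W_def by (simp add: cinner_scale_left)
      finally show ?thesis .
    qed
    ultimately show ?thesis unfolding W_def by blast
  qed
  have x'W: "P k *v x' \<in> W"
  proof -
    have "P k *v (P k *v x') = P k *v x'" by (rule proj_idem_v[OF prk])
    moreover have "cinner s (P k *v x') = 0" if s: "s \<in> S" for s
    proof -
      obtain m where m: "m \<in> K" "P m *v s = s" using cp[OF s] by blast
      have "cinner s (P k *v x') = cinner (P k *v s) x'" by (rule proj_cinner2[OF prk])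
      also have "\<dots> = 0"
      proof (cases "m = k")
        case True then show ?thesis using m x'o[OF s] by simp
      next
        case False
        then have "P k *v s = 0" using pvm_orth_v[OF PV k(1) m(1)] m(2) by metis
        then show ?thesis by simp
      qed
      finally show ?thesis .
    qed
    ultimately show ?thesis unfolding W_def by blast
  qed
  obtain u l where uW: "u \<in> W" and un: "norm u = 1" and ul: "A *v u = complex_of_real l *s u"
    using herm_eigvec[OF A csW invW x'W k(2)] by blast
  have uu: "cinner u u = 1" using un by (simp add: cinner_self)
  have uS: "u \<notin> S" using uW uu unfolding W_def by auto
  have su: "cinner s u = 0" if "s \<in> S" for s using uW that unfolding W_def by blast
  have us: "cinner u s = 0" if "s \<in> S" for s using su[OF that] cinner_commute[of u s] by simp
  have "orthonormal (insert u S)"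
    using o uu su us uS unfolding orthonormal_def by auto
  moreover have "\<forall>v\<in>insert u S. \<exists>l::real. A *v v = complex_of_real l *s v" using ul ev by blast
  moreover have "\<forall>v\<in>insert u S. \<exists>k\<in>K. P k *v v = v" using uW k(1) cp unfolding W_def by blast
  ultimately show ?thesis using uS unfolding goodset_def by blast
qed

lemma goodset_exists:
  assumes A: "hermitian A" and PV: "PVM K P" and comm: "\<And>k. k \<in> K \<Longrightarrow> A ** P k = P k ** A"
  shows "m \<le> CARD('n) \<Longrightarrow> \<exists>S::(complex^'n) set. goodset A K P S \<and> card S = m"
proof (induction m)
  case 0
  have "goodset A K P {}" unfolding goodset_def orthonormal_def by simp
  then show ?case by force
next
  case (Suc m)
  then obtain S :: "(complex^'n) set" where S: "goodset A K P S" "card S = m" by auto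
  have o: "orthonormal S" using S unfolding goodset_def by simp
  have "vec.span S \<noteq> UNIV"
  proof
    assume "vec.span S = UNIV"
    then have "vec.dim (UNIV::(complex^'n) set) = card S"
      using vec.dim_eq_card[of S UNIV] orthonormal_indep[OF o] vec.span_UNIV by metis
    then show False using S(2) Suc.prems vec_dim_UNIV by (metis Suc_n_not_le_n)
  qed
  then obtain x where "x \<notin> vec.span S" by auto
  then obtain u where "u \<notin> S" "goodset A K P (insert u S)"
    using goodset_extend[OF A PV comm S(1)] by blast
  moreover have "card (insert u S) = Suc m" using \<open>u \<notin> S\<close> S(2) orthonormal_finite[OF o] by simp
  ultimately show ?case by blast
qed



definition onb :: "('n \<Rightarrow> complex^'n) \<Rightarrow> bool" where
  "onb f \<longleftrightarrow> (\<forall>c d. cinner (f c) (f d) = (if c = d then 1 else 0))"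

lemma spectral_family:
  assumes A: "hermitian A" and PV: "PVM K P" and comm: "\<And>k. k \<in> K \<Longrightarrow> A ** P k = P k ** A"
  shows "\<exists>(f::'n \<Rightarrow> complex^'n) ev. onb f \<and> (\<forall>c. A *v f c = complex_of_real (ev c) *s f c)
           \<and> (\<forall>c. \<exists>k\<in>K. P k *v f c = f c)"
proof -
  obtain S :: "(complex^'n) set" where S: "goodset A K P S" "card S = CARD('n)"
    using goodset_exists[OF A PV comm, of "CARD('n)"] by blast
  have o: "orthonormal S" using S unfolding goodset_def by simp
  obtain h where h: "bij_betw h (UNIV::'n set) S"
    using finite_same_card_bij[of "UNIV::'n set" S] orthonormal_finite[OF o] S(2) by auto
  have hS: "h c \<in> S" for c using h bij_betwE by blast
  have hinj: "h c = h d \<longleftrightarrow> c = d" for c d using h unfolding bij_betw_def inj_on_def by blast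
  have "onb h" unfolding onb_def using o hS hinj unfolding orthonormal_def by metis
  moreover have "\<forall>c. \<exists>l::real. A *v h c = complex_of_real l *s h c" using S(1) hS unfolding goodset_def by blast
  then obtain ev where "\<forall>c. A *v h c = complex_of_real (ev c) *s h c" by metis
  moreover have "\<forall>c. \<exists>k\<in>K. P k *v h c = h c" using S(1) hS unfolding goodset_def by blast
  ultimately show ?thesis by blast
qed

definition umat :: "('n \<Rightarrow> complex^'n) \<Rightarrow> complex^'n^'n" where
  "umat f = (\<chi> i c. f c $ i)"

lemma umat_mv: "umat f *v y = (\<Sum>c\<in>UNIV. y$c *s f c)"
  by (simp add: umat_def matrix_vector_mult_def vec_eq_iff sum_component mult.commute)

lemma adj_umat_mv: "adj (umat f) *v x = (\<chi> c. cinner (f c) x)"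
  by (simp add: umat_def adj_def matrix_vector_mult_def cinner_def)

lemma onb_adjU: "onb f \<Longrightarrow> adj (umat f) ** umat f = mat 1"
  unfolding onb_def
  by (simp add: umat_def adj_def matrix_matrix_mult_def mat_def vec_eq_iff cinner_def)

lemma onb_unitary: "onb f \<Longrightarrow> unitary_mat (umat f)"
  unfolding unitary_mat_def using onb_adjU matrix_left_right_inverse by blast

lemma onb_expand: assumes "onb f" shows "x = (\<Sum>c\<in>UNIV. cinner (f c) x *s f c)"
proof -
  have "umat f ** adj (umat f) = mat 1" using onb_unitary[OF assms] unfolding unitary_mat_def by simp
  then have "x = umat f *v (adj (umat f) *v x)" by (metis matrix_vector_mul_assoc matrix_vector_mul_lid)
  then show ?thesis by (simp add: umat_mv adj_umat_mv)
qed

lemma diag_mv: "diag_mat d *v y = (\<chi> c. d c * y$c)"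
proof -
  have "(\<Sum>j\<in>UNIV. (if c = j then d c else 0) * y$j) = d c * y$c" for c
    by (subst sum.remove[of UNIV c]) (auto intro!: sum.neutral)
  then show ?thesis by (simp add: diag_mat_def matrix_vector_mult_def vec_eq_iff)
qed

lemma onb_decomp:
  assumes f: "onb f" and ev: "\<And>c. A *v f c = complex_of_real (ev c) *s f c"
  shows "A = umat f ** diag_mat (\<lambda>i. complex_of_real (ev i)) ** adj (umat f)"
proof (subst matrix_eq, intro allI)
  fix x
  have "A *v x = A *v (\<Sum>c\<in>UNIV. cinner (f c) x *s f c)" using onb_expand[OF f] by metis
  also have "\<dots> = (\<Sum>c\<in>UNIV. (complex_of_real (ev c) * cinner (f c) x) *s f c)"
    by (simp add: vec.sum vec.scale ev mult.commute)
  also have "\<dots> = (umat f ** diag_mat (\<lambda>i. complex_of_real (ev i)) ** adj (umat f)) *v x"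
    by (simp add: matrix_vector_mul_assoc[symmetric] umat_mv adj_umat_mv diag_mv)
  finally show "A *v x = (umat f ** diag_mat (\<lambda>i. complex_of_real (ev i)) ** adj (umat f)) *v x" .
qed

lemma mat_fun_eig:
  assumes ex: "\<exists>U ev. unitary_mat U \<and> A = U ** diag_mat (\<lambda>i. complex_of_real (ev i)) ** adj U"
    and v: "A *v v = complex_of_real \<mu> *s v"
  shows "mat_fun f A *v v = complex_of_real (f \<mu>) *s v"
proof -
  let ?Q = "\<lambda>B. \<exists>U (ev::'a \<Rightarrow> real). unitary_mat U \<and>
       A = U ** diag_mat (\<lambda>i. complex_of_real (ev i)) ** adj U \<and>
       B = U ** diag_mat (\<lambda>i. complex_of_real (f (ev i))) ** adj U"
  have "\<exists>B. ?Q B" using ex by blast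
  then have "?Q (mat_fun f A)" unfolding mat_fun_def by (rule someI_ex)
  then obtain U ev where U: "unitary_mat U" and AU: "A = U ** diag_mat (\<lambda>i. complex_of_real (ev i)) ** adj U"
    and BU: "mat_fun f A = U ** diag_mat (\<lambda>i. complex_of_real (f (ev i))) ** adj U" by blast
  define c where "c = adj U *v v"
  have UU: "adj U ** U = mat 1" "U ** adj U = mat 1" using U unfolding unitary_mat_def by auto
  have "adj U *v (A *v v) = diag_mat (\<lambda>i. complex_of_real (ev i)) *v c"
    unfolding AU c_def by (simp add: matrix_vector_mul_assoc matrix_mul_assoc UU matrix_mul_lid)
  moreover have "adj U *v (A *v v) = complex_of_real \<mu> *s c" unfolding v c_def by (simp add: vec.scale)
  ultimately have e: "complex_of_real (ev i) * c$i = complex_of_real \<mu> * c$i" for i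
    by (auto simp: diag_mv vec_eq_iff)
  have "diag_mat (\<lambda>i. complex_of_real (f (ev i))) *v c = complex_of_real (f \<mu>) *s c"
    unfolding diag_mv vec_eq_iff using e by (auto simp: mult_right_cancel)
  then have "mat_fun f A *v v = U *v (complex_of_real (f \<mu>) *s c)"
    unfolding BU c_def by (simp add: matrix_vector_mul_assoc[symmetric])
  also have "\<dots> = complex_of_real (f \<mu>) *s v"
    unfolding c_def by (simp add: vec.scale matrix_vector_mul_assoc UU)
  finally show ?thesis .
qed



lemma mat_mult_diff: "(A::complex^'n^'n) ** (X - Y) = A ** X - A ** Y"
  by (simp add: vec_eq_iff matrix_matrix_mult_def sum_subtractf algebra_simps)

lemma trace_onb: assumes f: "onb f" shows "trace M = (\<Sum>c\<in>UNIV. cinner (f c) (M *v f c))"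
proof -
  have UU: "umat f ** adj (umat f) = mat 1" using onb_unitary[OF f] unfolding unitary_mat_def by simp
  have "trace M = trace ((M ** umat f) ** adj (umat f))" by (simp add: matrix_mul_assoc[symmetric] UU)
  also have "\<dots> = trace (adj (umat f) ** (M ** umat f))" by (rule trace_mul_sym)
  also have "\<dots> = (\<Sum>c\<in>UNIV. cinner (f c) (M *v f c))"
    by (simp add: trace_def matrix_matrix_mult_def adj_def umat_def cinner_def matrix_vector_mult_def)
  finally show ?thesis .
qed

lemma pinch_mv: "pinch J F \<rho> *v x = (\<Sum>j\<in>J. F j *v (\<rho> *v (F j *v x)))"
  unfolding pinch_def by (simp add: matsum_mv matrix_vector_mul_assoc matrix_mul_assoc)

lemma pinch_herm: assumes "PVM J F" "hermitian \<rho>" shows "hermitian (pinch J F \<rho>)"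
proof -
  have "adj (F j ** \<rho> ** F j) = F j ** \<rho> ** F j" if "j \<in> J" for j
    using pvm_proj[OF assms(1) that] assms(2) unfolding projection_def hermitian_def
    by (simp add: adj_mult matrix_mul_assoc)
  then show ?thesis unfolding hermitian_def pinch_def adj_sum by (simp cong: sum.cong)
qed

lemma pinch_on_range:
  assumes PV: "PVM J F" and j: "j \<in> J" and b: "F j *v b = b"
  shows "pinch J F \<rho> *v b = F j *v (\<rho> *v b)"
proof -
  have fin: "finite J" using PV unfolding PVM_def by simp
  have "pinch J F \<rho> *v b = F j *v (\<rho> *v (F j *v b)) + (\<Sum>j'\<in>J-{j}. F j' *v (\<rho> *v (F j' *v b)))"
    unfolding pinch_mv using fin j by (simp add: sum.remove)
  also have "(\<Sum>j'\<in>J-{j}. F j' *v (\<rho> *v (F j' *v b))) = 0"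
  proof (intro sum.neutral ballI)
    fix j' assume "j' \<in> J - {j}"
    then have "F j' *v b = 0" using pvm_orth_v[OF PV, of j' j b] j b by auto
    then show "F j' *v (\<rho> *v (F j' *v b)) = 0" by simp
  qed
  finally show ?thesis using b by simp
qed

lemma pinch_comm:
  assumes PV: "PVM J F" and j: "j \<in> J"
  shows "pinch J F \<rho> ** F j = F j ** pinch J F \<rho>"
proof (subst matrix_eq, intro allI)
  fix x
  have pj: "projection (F j)" by (rule pvm_proj[OF PV j])
  have "(pinch J F \<rho> ** F j) *v x = F j *v (\<rho> *v (F j *v x))"
    by (simp add: matrix_vector_mul_assoc[symmetric] pinch_on_range[OF PV j] proj_idem_v[OF pj])
  moreover have "(F j ** pinch J F \<rho>) *v x = F j *v (\<rho> *v (F j *v x))"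
  proof -
    have fin: "finite J" using PV unfolding PVM_def by simp
    have "(F j ** pinch J F \<rho>) *v x = (\<Sum>j'\<in>J. F j *v (F j' *v (\<rho> *v (F j' *v x))))"
      by (simp add: matrix_vector_mul_assoc[symmetric] pinch_mv vec.sum)
    also have "\<dots> = F j *v (F j *v (\<rho> *v (F j *v x))) + (\<Sum>j'\<in>J-{j}. F j *v (F j' *v (\<rho> *v (F j' *v x))))"
      using fin j by (simp add: sum.remove)
    also have "(\<Sum>j'\<in>J-{j}. F j *v (F j' *v (\<rho> *v (F j' *v x)))) = 0"
      using pvm_orth_v[OF PV j] by (intro sum.neutral) auto
    finally show ?thesis by (simp add: proj_idem_v[OF pj])
  qed
  ultimately show "(pinch J F \<rho> ** F j) *v x = (F j ** pinch J F \<rho>) *v x" by simp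
qed

lemma pinch_diag:
  assumes PV: "PVM J F" and j: "j \<in> J" and b: "F j *v b = b"
  shows "cinner b (pinch J F \<rho> *v b) = cinner b (\<rho> *v b)"
  using pinch_on_range[OF PV j b] proj_cinner2[OF pvm_proj[OF PV j], of b] b by simp



lemma onb_cinner_expand: assumes "onb b" shows "cinner x y = (\<Sum>m\<in>UNIV. cinner x (b m) * cinner (b m) y)"
proof -
  have "cinner x y = cinner x (\<Sum>m\<in>UNIV. cinner (b m) y *s b m)" using onb_expand[OF assms, of y] by metis
  then show ?thesis by (simp add: cinner_sum_right cinner_scale_right mult.commute)
qed

lemma onb_parseval: assumes "onb b" shows "cinner x x = complex_of_real (\<Sum>m\<in>UNIV. (cmod (cinner x (b m)))^2)"
proof -
  have "cinner x x = (\<Sum>m\<in>UNIV. cinner x (b m) * cnj (cinner x (b m)))"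
    using onb_cinner_expand[OF assms, of x x] cinner_commute[of "b _" x] by simp
  also have "\<dots> = (\<Sum>m\<in>UNIV. complex_of_real ((cmod (cinner x (b m)))^2))"
    by (intro sum.cong refl) (metis complex_norm_square)
  finally show ?thesis by (simp add: of_real_sum)
qed

lemma block_unique:
  assumes PE: "PVM I E" and i: "i \<in> I" "E i *v v = v" and i': "i' \<in> I" "E i' *v v = v" and v: "v \<noteq> 0"
  shows "i = i'"
proof (rule ccontr)
  assume "i \<noteq> i'"
  then have "E i *v (E i' *v v) = 0" using pvm_orth_v[OF PE i(1) i'(1)] by blast
  then show False using i i' v by simp
qed

lemma pvm_le_dich:
  assumes PF: "PVM J F" and le: "pvm_le I E J F" and i: "i \<in> I" and j: "j \<in> J" and b: "F j *v v = v"
  shows "E i *v v = v \<or> E i *v v = 0"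
proof -
  obtain S where S: "S \<subseteq> J" "E i = (\<Sum>j\<in>S. F j)" using le i unfolding pvm_le_def by blast
  have fin: "finite S" using S(1) PF unfolding PVM_def using finite_subset by blast
  have z: "F j' *v v = 0" if "j' \<in> J" "j' \<noteq> j" for j' using pvm_orth_v[OF PF that(1) j that(2), of v] b by simp
  have Ev: "E i *v v = (\<Sum>j'\<in>S. F j' *v v)" using S(2) by (simp add: matsum_mv)
  show ?thesis
  proof (cases "j \<in> S")
    case True
    have "E i *v v = F j *v v + (\<Sum>j'\<in>S-{j}. F j' *v v)" using Ev fin True by (simp add: sum.remove)
    also have "(\<Sum>j'\<in>S-{j}. F j' *v v) = 0" using z S(1) by (intro sum.neutral) auto
    finally show ?thesis using b by simp
  next
    case False
    have "(\<Sum>j'\<in>S. F j' *v v) = 0" using z S(1) False by (intro sum.neutral) auto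
    then show ?thesis using Ev by simp
  qed
qed

theorem lemma10:
  fixes I :: "'i set" and J :: "'j set"
    and E :: "'i \<Rightarrow> complex^'n^'n" and F :: "'j \<Rightarrow> complex^'n^'n"
    and \<rho> :: "complex^'n^'n"
  assumes "PVM I E" and "PVM J F" and "pvm_le I E J F"
    and "density_op \<rho>" and "commutes_with \<rho> I E"
  shows "rel_entropy \<rho> (pinch J F \<rho>) \<le> ereal (ln (real (width I E)))"
proof -
  note PE = assms(1) and PF = assms(2) and le = assms(3) and dens = assms(4) and comm = assms(5)
  define \<sigma> where "\<sigma> = pinch J F \<rho>"
  have psd: "psd \<rho>" and tr\<rho>: "trace \<rho> = 1" using dens unfolding density_op_def by auto
  have h\<rho>: "hermitian \<rho>" using psd unfolding psd_def by simp
  have psdq: "Re (cinner x (\<rho> *v x)) \<ge> 0" for x using psd unfolding psd_def cinner_def by simp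
  have h\<sigma>: "hermitian \<sigma>" unfolding \<sigma>_def by (rule pinch_herm[OF PF h\<rho>])
  have commE: "\<And>i. i \<in> I \<Longrightarrow> \<rho> ** E i = E i ** \<rho>" using comm unfolding commutes_with_def by blast
  have commF: "\<And>j. j \<in> J \<Longrightarrow> \<sigma> ** F j = F j ** \<sigma>" unfolding \<sigma>_def by (rule pinch_comm[OF PF])
  obtain a :: "'n \<Rightarrow> complex^'n" and r where a: "onb a" and ar: "\<And>k. \<rho> *v a k = complex_of_real (r k) *s a k"
    and aE: "\<And>k. \<exists>i\<in>I. E i *v a k = a k"
    using spectral_family[OF h\<rho> PE commE] by blast
  obtain b :: "'n \<Rightarrow> complex^'n" and s where b: "onb b" and bs: "\<And>m. \<sigma> *v b m = complex_of_real (s m) *s b m"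
    and bF: "\<And>m. \<exists>j\<in>J. F j *v b m = b m"
    using spectral_family[OF h\<sigma> PF commF] by blast
  have ex\<rho>: "\<exists>U ev. unitary_mat U \<and> \<rho> = U ** diag_mat (\<lambda>i. complex_of_real (ev i)) ** adj U"
    using onb_unitary[OF a] onb_decomp[OF a ar] by blast
  have ex\<sigma>: "\<exists>U ev. unitary_mat U \<and> \<sigma> = U ** diag_mat (\<lambda>i. complex_of_real (ev i)) ** adj U"
    using onb_unitary[OF b] onb_decomp[OF b bs] by blast
  define g where "g x = (if x > 0 then ln x else 0)" for x :: real
  have mlog: "mat_log A = mat_fun g A" for A :: "complex^'n^'n"
    unfolding mat_log_def g_def by simp
  have La: "mat_log \<rho> *v a k = complex_of_real (g (r k)) *s a k" for k
    unfolding mlog by (rule mat_fun_eig[OF ex\<rho> ar])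
  have Lb: "mat_log \<sigma> *v b m = complex_of_real (g (s m)) *s b m" for m
    unfolding mlog by (rule mat_fun_eig[OF ex\<sigma> bs])
  have aa: "cinner (a k) (a k') = (if k = k' then 1 else 0)" for k k' using a unfolding onb_def by blast
  have bb: "cinner (b m) (b m') = (if m = m' then 1 else 0)" for m m' using b unfolding onb_def by blast
  have r_eq: "cinner (a k) (\<rho> *v a k) = complex_of_real (r k)" for k
    by (simp add: ar cinner_scale_right aa)
  have s_eq: "cinner (b m) (\<rho> *v b m) = complex_of_real (s m)" for m
  proof -
    obtain j where j: "j \<in> J" "F j *v b m = b m" using bF by blast
    have "cinner (b m) (\<rho> *v b m) = cinner (b m) (\<sigma> *v b m)"
      unfolding \<sigma>_def by (rule pinch_diag[OF PF j, symmetric])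
    then show ?thesis by (simp add: bs cinner_scale_right bb)
  qed
  have r_nn: "r k \<ge> 0" for k using psdq[of "a k"] r_eq[of k] by simp
  have s_nn: "s m \<ge> 0" for m using psdq[of "b m"] s_eq[of m] by simp
  have tr1: "(\<Sum>k\<in>UNIV. r k) = 1"
  proof -
    have "trace \<rho> = (\<Sum>k\<in>UNIV. complex_of_real (r k))" unfolding trace_onb[OF a] r_eq ..
    then show ?thesis using tr\<rho> by (metis of_real_eq_1_iff of_real_sum)
  qed
  have trace_eq: "trace (\<rho> ** (mat_log \<rho> - mat_log \<sigma>)) =
      complex_of_real ((\<Sum>k\<in>UNIV. r k * g (r k)) - (\<Sum>m\<in>UNIV. s m * g (s m)))"
  proof -
    have "trace (\<rho> ** mat_log \<rho>) = (\<Sum>k\<in>UNIV. complex_of_real (r k * g (r k)))"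
      unfolding trace_onb[OF a] by (simp add: matrix_vector_mul_assoc[symmetric] La vec.scale cinner_scale_right r_eq mult.commute)
    moreover have "trace (\<rho> ** mat_log \<sigma>) = (\<Sum>m\<in>UNIV. complex_of_real (s m * g (s m)))"
      unfolding trace_onb[OF b] by (simp add: matrix_vector_mul_assoc[symmetric] Lb vec.scale cinner_scale_right s_eq mult.commute)
    ultimately show ?thesis by (simp add: mat_mult_diff trace_sub of_real_sum[symmetric])
  qed
  have rho_exp: "\<rho> *v x = (\<Sum>k\<in>UNIV. (complex_of_real (r k) * cinner (a k) x) *s a k)" for x
  proof -
    have "\<rho> *v x = \<rho> *v (\<Sum>k\<in>UNIV. cinner (a k) x *s a k)" using onb_expand[OF a, of x] by metis
    then show ?thesis by (simp add: vec.sum vec.scale ar mult.commute)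
  qed
  have s_formula: "s m = (\<Sum>k\<in>UNIV. r k * (cmod (cinner (a k) (b m)))^2)" for m
  proof -
    have "complex_of_real (s m) = cinner (b m) (\<rho> *v b m)" using s_eq by simp
    also have "\<dots> = (\<Sum>k\<in>UNIV. complex_of_real (r k) * (cinner (a k) (b m) * cnj (cinner (a k) (b m))))"
      unfolding rho_exp by (simp add: cinner_sum_right cinner_scale_right cinner_commute[of "b m" "a _"] mult_ac)
    also have "\<dots> = complex_of_real (\<Sum>k\<in>UNIV. r k * (cmod (cinner (a k) (b m)))^2)"
      by (simp add: complex_norm_square[symmetric] of_real_sum)
    finally show ?thesis by (simp only: of_real_eq_iff)
  qed
  have parseval: "(\<Sum>m\<in>UNIV. (cmod (cinner (a k) (b m)))^2) = 1" for k
    using onb_parseval[OF b, of "a k"] aa[of k k] by (simp only: if_True) (metis of_real_eq_1_iff)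
  have supp: "range (\<lambda>x. \<rho> *v x) \<subseteq> range (\<lambda>x. \<sigma> *v x)"
  proof -
    define y where "y k = (\<Sum>m\<in>UNIV. (cinner (b m) (a k) / complex_of_real (s m)) *s b m)" for k
    have ry: "complex_of_real (r k) *s (\<sigma> *v y k) = complex_of_real (r k) *s a k" for k
    proof (cases "r k = 0")
      case True then show ?thesis by simp
    next
      case False
      then have rpos: "r k > 0" using r_nn[of k] by simp
      have c: "(cinner (b m) (a k) / complex_of_real (s m)) * complex_of_real (s m) = cinner (b m) (a k)" for m
      proof (cases "s m = 0")
        case False then show ?thesis by simp
      next
        case True
        then have "(\<Sum>k'\<in>UNIV. r k' * (cmod (cinner (a k') (b m)))^2) = 0" using s_formula[of m] by simp
        then have "r k * (cmod (cinner (a k) (b m)))^2 = 0"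
          using sum_nonneg_eq_0_iff[of UNIV "\<lambda>k'. r k' * (cmod (cinner (a k') (b m)))^2"] r_nn by simp
        then have "cinner (a k) (b m) = 0" using rpos by simp
        then have "cinner (b m) (a k) = 0" using cinner_commute[of "b m" "a k"] by simp
        then show ?thesis by simp
      qed
      have "\<sigma> *v y k = (\<Sum>m\<in>UNIV. ((cinner (b m) (a k) / complex_of_real (s m)) * complex_of_real (s m)) *s b m)"
        unfolding y_def by (simp only: vec.sum vec.scale bs vector_smult_assoc)
      also have "\<dots> = (\<Sum>m\<in>UNIV. cinner (b m) (a k) *s b m)" unfolding c ..
      also have "\<dots> = a k" using onb_expand[OF b, of "a k"] by metis
      finally show ?thesis by simp
    qed
    show ?thesis
    proof
      fix z assume "z \<in> range (\<lambda>x. \<rho> *v x)"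
      then obtain x where x: "z = \<rho> *v x" by blast
      have "\<rho> *v x = (\<Sum>k\<in>UNIV. cinner (a k) x *s (complex_of_real (r k) *s a k))"
        unfolding rho_exp by (simp add: mult.commute)
      also have "\<dots> = (\<Sum>k\<in>UNIV. cinner (a k) x *s (complex_of_real (r k) *s (\<sigma> *v y k)))"
        by (simp only: ry)
      also have "\<dots> = \<sigma> *v (\<Sum>k\<in>UNIV. cinner (a k) x *s (complex_of_real (r k) *s y k))"
        by (simp add: vec.sum vec.scale)
      finally show "z \<in> range (\<lambda>x. \<sigma> *v x)" using x by blast
    qed
  qed
  have finI: "finite I" using PE unfolding PVM_def by simp
  have a0: "a k \<noteq> 0" for k using aa[of k k] by auto
  have b0: "b m \<noteq> 0" for m using bb[of m m] by auto
  have bE: "\<exists>i\<in>I. E i *v b m = b m" for m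
  proof (rule ccontr)
    assume na: "\<not> (\<exists>i\<in>I. E i *v b m = b m)"
    obtain j where j: "j \<in> J" "F j *v b m = b m" using bF by blast
    have "E i *v b m = 0" if "i \<in> I" for i using pvm_le_dich[OF PF le that j] na that by blast
    then have "(\<Sum>i\<in>I. E i *v b m) = 0" by simp
    then show False using pvm_sum_v[OF PE, of "b m"] b0 by simp
  qed
  define ba where "ba k = (SOME i. i \<in> I \<and> E i *v a k = a k)" for k
  define bb where "bb m = (SOME i. i \<in> I \<and> E i *v b m = b m)" for m
  have ba: "ba k \<in> I \<and> E (ba k) *v a k = a k" for k
    unfolding ba_def by (rule someI_ex) (use aE in blast)
  have bbm: "bb m \<in> I \<and> E (bb m) *v b m = b m" for m
    unfolding bb_def by (rule someI_ex) (use bE in blast)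
  have orth: "cinner (a k) (b m) = 0" if ne: "ba k \<noteq> bb m" for k m
  proof -
    have "cinner (a k) (b m) = cinner (a k) (E (bb m) *v b m)" using bbm by simp
    also have "\<dots> = cinner (E (bb m) *v (E (ba k) *v a k)) (b m)"
      using proj_cinner2[OF pvm_proj[OF PE], of "bb m" "a k" "b m"] bbm ba by simp
    also have "E (bb m) *v (E (ba k) *v a k) = 0" using pvm_orth_v[OF PE] bbm ba ne by metis
    finally show ?thesis by simp
  qed
  define p where "p i = (\<Sum>k\<in>{k. ba k = i}. r k)" for i
  have psum: "(\<Sum>m\<in>{m. bb m = i}. s m) = p i" for i
  proof -
    have inner: "(\<Sum>m\<in>{m. bb m = i}. (cmod (cinner (a k) (b m)))^2) = (if ba k = i then 1 else 0)" for k
    proof (cases "ba k = i")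
      case True
      have "(\<Sum>m\<in>{m. bb m = i}. (cmod (cinner (a k) (b m)))^2) = (\<Sum>m\<in>UNIV. (cmod (cinner (a k) (b m)))^2)"
        using orth True by (intro sum.mono_neutral_left) auto
      then show ?thesis using parseval True by simp
    next
      case False
      then show ?thesis using orth by (auto intro!: sum.neutral)
    qed
    have "(\<Sum>m\<in>{m. bb m = i}. s m) = (\<Sum>k\<in>UNIV. r k * (\<Sum>m\<in>{m. bb m = i}. (cmod (cinner (a k) (b m)))^2))"
      unfolding s_formula by (simp add: sum_distrib_left sum.swap[of _ "{m. bb m = i}"])
    also have "\<dots> = (\<Sum>k\<in>UNIV. if ba k = i then r k else 0)" unfolding inner by (simp add: if_distrib cong: if_cong)
    also have "\<dots> = p i" unfolding p_def by (simp add: sum.If_cases)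
    finally show ?thesis .
  qed
  define w where "w = width I E"
  have cardB: "card {m. bb m = i} \<le> w" if i: "i \<in> I" for i
  proof -
    have inj: "inj b"
    proof (rule injI)
      fix x y assume "b x = b y"
      then have "cinner (b x) (b y) = 1" using bb[of x x] by simp
      then show "x = y" using bb[of x y] by (simp split: if_splits)
    qed
    have "orthonormal (b ` {m. bb m = i})" unfolding orthonormal_def using bb inj
      by (auto simp: inj_eq)
    then have ind: "vec.independent (b ` {m. bb m = i})" by (rule orthonormal_indep)
    have sub: "b ` {m. bb m = i} \<subseteq> range (\<lambda>x. E i *v x)"
    proof
      fix z assume "z \<in> b ` {m. bb m = i}"
      then obtain m where m: "bb m = i" "z = b m" by blast
      then have "z = E i *v b m" using bbm[of m] by simp
      then show "z \<in> range (\<lambda>x. E i *v x)" by blast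
    qed
    have "card {m. bb m = i} = card (b ` {m. bb m = i})" using inj by (simp add: card_image inj_on_subset)
    also have "\<dots> \<le> range_dim (E i)" unfolding range_dim_def by (rule vec.independent_card_le_dim[OF sub ind])
    also have "\<dots> \<le> w" unfolding w_def width_def using finI i by (intro le_cSup_finite) auto
    finally show ?thesis .
  qed
  have baI: "ba ` UNIV \<subseteq> I" using ba by blast
  have bbI: "bb ` UNIV \<subseteq> I" using bbm by blast
  have p_nn: "p i \<ge> 0" for i unfolding p_def using r_nn by (simp add: sum_nonneg)
  have grp_r: "(\<Sum>k\<in>UNIV. h k) = (\<Sum>i\<in>I. \<Sum>k\<in>{k. ba k = i}. h k)" for h :: "'n \<Rightarrow> real"
    using sum.group[OF finite finI baI, of h] by simp
  have grp_s: "(\<Sum>m\<in>UNIV. h m) = (\<Sum>i\<in>I. \<Sum>m\<in>{m. bb m = i}. h m)" for h :: "'n \<Rightarrow> real"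
    using sum.group[OF finite finI bbI, of h] by simp
  have psum1: "(\<Sum>i\<in>I. p i) = 1" unfolding p_def using grp_r[of r] tr1 by simp
  have ineq1: "(\<Sum>k\<in>UNIV. r k * g (r k)) \<le> (\<Sum>i\<in>I. p i * g (p i))"
  proof -
    have "(\<Sum>k\<in>{k. ba k = i}. r k * g (r k)) \<le> p i * g (p i)" for i
    proof -
      have "r k * g (r k) \<le> r k * g (p i)" if k: "ba k = i" for k
      proof (cases "r k = 0")
        case True then show ?thesis by simp
      next
        case False
        then have rp: "r k > 0" using r_nn[of k] by simp
        have "r k \<le> p i" unfolding p_def using k r_nn by (intro member_le_sum) auto
        then have "g (r k) \<le> g (p i)" using rp unfolding g_def by auto
        then show ?thesis using rp by simp
      qed
      then have "(\<Sum>k\<in>{k. ba k = i}. r k * g (r k)) \<le> (\<Sum>k\<in>{k. ba k = i}. r k * g (p i))"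
        by (intro sum_mono) auto
      also have "\<dots> = p i * g (p i)" unfolding p_def by (simp add: sum_distrib_right)
      finally show ?thesis .
    qed
    then show ?thesis unfolding grp_r[of "\<lambda>k. r k * g (r k)"] by (intro sum_mono)
  qed
  have ineq2: "p i * g (p i) - (\<Sum>m\<in>{m. bb m = i}. s m * g (s m)) \<le> p i * ln (real w)" if i: "i \<in> I" for i
  proof (cases "p i = 0")
    case True
    then have "\<forall>m\<in>{m. bb m = i}. s m = 0" using psum[of i] s_nn
      by (subst sum_nonneg_eq_0_iff[symmetric]) auto
    then show ?thesis using True by (simp add: g_def)
  next
    case False
    then have pp: "p i > 0" using p_nn[of i] by simp
    have ne: "{m. bb m = i} \<noteq> {}"
    proof
      assume "{m. bb m = i} = {}"
      then have "p i = 0" using psum[of i] by (metis sum.empty)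
      then show False using pp by simp
    qed
    then have "card {m. bb m = i} \<ge> 1" by (simp add: Suc_le_eq card_gt_0_iff)
    then have w1: "real w \<ge> 1" using cardB[OF i] by linarith
    have tm: "s m * g (p i) - s m * g (s m) - s m * ln (real w) \<le> p i / real w - s m" for m
    proof (cases "s m = 0")
      case True then show ?thesis using pp w1 by (simp add: g_def)
    next
      case False
      then have sp: "s m > 0" using s_nn[of m] by simp
      have pos: "p i / (real w * s m) > 0" using pp sp w1 by simp
      have "ln (p i / (real w * s m)) = ln (p i) - ln (real w) - ln (s m)"
        using pp sp w1 by (simp add: ln_div ln_mult)
      moreover have "ln (p i / (real w * s m)) \<le> p i / (real w * s m) - 1" using ln_le_minus_one[OF pos] .
      ultimately have "ln (p i) - ln (real w) - ln (s m) \<le> p i / (real w * s m) - 1" by simp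
      then have "s m * (ln (p i) - ln (real w) - ln (s m)) \<le> s m * (p i / (real w * s m) - 1)"
        using sp by (intro mult_left_mono) auto
      also have "\<dots> = p i / real w - s m" using sp w1 by (simp add: field_simps)
      finally show ?thesis using sp pp unfolding g_def by (simp add: algebra_simps)
    qed
    have "(\<Sum>m\<in>{m. bb m = i}. s m * g (p i) - s m * g (s m) - s m * ln (real w))
        \<le> (\<Sum>m\<in>{m. bb m = i}. p i / real w - s m)" by (intro sum_mono tm)
    also have "\<dots> = real (card {m. bb m = i}) * p i / real w - p i"
      using psum[of i] by (simp add: sum_subtractf)
    also have "\<dots> \<le> 0"
    proof -
      have "real (card {m. bb m = i}) \<le> real w" using cardB[OF i] by simp
      then have "real (card {m. bb m = i}) * p i \<le> real w * p i" using pp by (intro mult_right_mono) auto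
      then have "real (card {m. bb m = i}) * p i / real w \<le> p i" using w1 by (simp add: divide_le_eq mult.commute)
      then show ?thesis by simp
    qed
    finally have "(\<Sum>m\<in>{m. bb m = i}. s m * g (p i) - s m * g (s m) - s m * ln (real w)) \<le> 0" .
    moreover have "(\<Sum>m\<in>{m. bb m = i}. s m * g (p i) - s m * g (s m) - s m * ln (real w))
        = p i * g (p i) - (\<Sum>m\<in>{m. bb m = i}. s m * g (s m)) - p i * ln (real w)"
      using psum[of i] by (simp add: sum_subtractf sum_distrib_right[symmetric])
    ultimately show ?thesis by simp
  qed
  have main: "(\<Sum>k\<in>UNIV. r k * g (r k)) - (\<Sum>m\<in>UNIV. s m * g (s m)) \<le> ln (real w)"
  proof -
    have "(\<Sum>k\<in>UNIV. r k * g (r k)) - (\<Sum>m\<in>UNIV. s m * g (s m))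
        \<le> (\<Sum>i\<in>I. p i * g (p i)) - (\<Sum>i\<in>I. \<Sum>m\<in>{m. bb m = i}. s m * g (s m))"
      using ineq1 grp_s[of "\<lambda>m. s m * g (s m)"] by simp
    also have "\<dots> = (\<Sum>i\<in>I. p i * g (p i) - (\<Sum>m\<in>{m. bb m = i}. s m * g (s m)))"
      by (simp add: sum_subtractf)
    also have "\<dots> \<le> (\<Sum>i\<in>I. p i * ln (real w))" by (intro sum_mono ineq2)
    also have "\<dots> = ln (real w)" using psum1 by (simp add: sum_distrib_right[symmetric])
    finally show ?thesis .
  qed
  show ?thesis
    unfolding rel_entropy_def \<sigma>_def[symmetric] using supp trace_eq main w_def by simp
qed

end
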